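(* Let $f$ and $g$ be arithmetic functions with $f$ multiplicative, and let $n$ be a positive integer such that $(\mathrm{Id}*f)(p^{\alpha})\neq 0$ for every prime power $p^{\alpha}\| n$. Then $$(f*\Phi_g)(n)=(\mathrm{Id}*f)(n)\sum_{p^{\alpha}\| n}\frac{(f*\Phi_g)(p^{\alpha})}{(\mathrm{Id}*f)(p^{\alpha})}.$$
   Context: $\mathbb{N}$ denotes the positive integers; $p^{\alpha}\|n$ means $p$ prime, $p^\alpha\mid n$, $p^{\alpha+1}\nmid n$, and sums over $p^\alpha\|n$ run over the prime-power factors of $n$. $\mathrm{Id}(n)=n$. Dirichlet convolution: $(u*v)(n)=\sum_{d\mid n}u(d)v(n/d)$. $f$ is multiplicative if $f(mn)=f(m)f(n)$ for coprime $m,n$. The additive transform of an arithmetic function $g$ is the function $\Phi_g:\mathbb{N}\to\mathbb{C}$ with $\Phi_g(p^{\alpha})=g(p^{\alpha})$ for every prime $p$ and $\alpha\ge1$, and $\Phi_g(nm)=n\Phi_g(m)+m\Phi_g(n)$ for coprime $m,n$; equivalently $\Phi_g(n)=n\sum_{p^{\alpha}\| n} g(p^{\alpha})/p^{\alpha}$. *)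

theory Defs
  imports "HOL-Computational_Algebra.Computational_Algebra"
begin

definition dconv :: "(nat \<Rightarrow> complex) \<Rightarrow> (nat \<Rightarrow> complex) \<Rightarrow> nat \<Rightarrow> complex" where
  "dconv u v n = (\<Sum>d | d dvd n. u d * v (n div d))"

definition multiplicative_fun :: "(nat \<Rightarrow> complex) \<Rightarrow> bool" where
  "multiplicative_fun f \<longleftrightarrow>
     (\<forall>m n. m > 0 \<longrightarrow> n > 0 \<longrightarrow> coprime m n \<longrightarrow> f (m * n) = f m * f n)"

definition Id_fun :: "nat \<Rightarrow> complex" where
  "Id_fun n = of_nat n"

definition additive_transform :: "(nat \<Rightarrow> complex) \<Rightarrow> nat \<Rightarrow> complex" where
  "additive_transform g n =
     of_nat n * (\<Sum>p\<in>prime_factors n.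
        g (p ^ multiplicity p n) / of_nat (p ^ multiplicity p n))"

end

theory Submission
  imports Defs
begin

lemma divisor_sum_coprime:
  fixes h :: "nat \<Rightarrow> complex" and m k :: nat
  assumes "m > 0" "k > 0" "coprime m k"
  shows "(\<Sum>d | d dvd m * k. h d) = (\<Sum>d1 | d1 dvd m. \<Sum>d2 | d2 dvd k. h (d1 * d2))"
proof -
  have fm: "finite {d. d dvd m}" using assms by simp
  have fk: "finite {d. d dvd k}" using assms by simp
  have bij: "bij_betw (\<lambda>(d1,d2). d1 * d2) ({d. d dvd m} \<times> {d. d dvd k}) {d. d dvd m * k}"
  proof (rule bij_betwI')
    fix x y assume x: "x \<in> {d. d dvd m} \<times> {d. d dvd k}" and y: "y \<in> {d. d dvd m} \<times> {d. d dvd k}"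
    obtain d1 d2 where xd: "x = (d1,d2)" by force
    obtain e1 e2 where ye: "y = (e1,e2)" by force
    have h1: "d1 dvd m" "d2 dvd k" "e1 dvd m" "e2 dvd k" using x y xd ye by auto
    show "((\<lambda>(d1,d2). d1 * d2) x = (\<lambda>(d1,d2). d1 * d2) y) = (x = y)"
    proof
      assume eq: "(\<lambda>(d1,d2). d1 * d2) x = (\<lambda>(d1,d2). d1 * d2) y"
      hence eq': "d1 * d2 = e1 * e2" using xd ye by simp
      have c1: "coprime d1 e2" using h1 assms(3) coprime_divisors by blast
      have c2: "coprime e1 d2" using h1 assms(3) coprime_divisors by blast
      have "d1 dvd e1 * e2" using eq' by (metis dvd_triv_left)
      hence a: "d1 dvd e1" using c1 by (simp add: coprime_dvd_mult_left_iff)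
      have "e1 dvd d1 * d2" using eq' by (metis dvd_triv_left)
      hence b: "e1 dvd d1" using c2 by (simp add: coprime_dvd_mult_left_iff)
      have "d1 = e1" using a b dvd_antisym by blast
      moreover have "d1 > 0" using h1 assms by (metis dvd_0_left_iff gr0I)
      ultimately have "d2 = e2" using eq' by simp
      thus "x = y" using \<open>d1 = e1\<close> xd ye by simp
    qed simp
  next
    fix x assume "x \<in> {d. d dvd m} \<times> {d. d dvd k}"
    thus "(\<lambda>(d1,d2). d1 * d2) x \<in> {d. d dvd m * k}" by (auto intro: mult_dvd_mono)
  next
    fix d assume "d \<in> {d. d dvd m * k}"
    then obtain a b where "d = a * b" "a dvd m" "b dvd k" by (auto elim: dvd_productE)
    thus "\<exists>x\<in>{d. d dvd m} \<times> {d. d dvd k}. d = (\<lambda>(d1,d2). d1 * d2) x" by force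
  qed
  have "(\<Sum>d | d dvd m * k. h d) = (\<Sum>x\<in>{d. d dvd m} \<times> {d. d dvd k}. h ((\<lambda>(d1,d2). d1 * d2) x))"
    using sum.reindex_bij_betw[OF bij, of h] by simp
  also have "\<dots> = (\<Sum>d1 | d1 dvd m. \<Sum>d2 | d2 dvd k. h (d1 * d2))"
    using sum.cartesian_product[of "\<lambda>d1 d2. h (d1*d2)" "{d. d dvd k}" "{d. d dvd m}"]
    by (simp add: case_prod_unfold)
  finally show ?thesis .
qed

lemma mult_apply:
  assumes "multiplicative_fun f" "a > 0" "b > 0" "coprime a b"
  shows "f (a * b) = f a * f b"
  using assms unfolding multiplicative_fun_def by blast

lemma Phi_coprime:
  fixes a b :: nat
  assumes "a > 0" "b > 0" "coprime a b"
  shows "additive_transform g (a * b) = of_nat a * additive_transform g b + of_nat b * additive_transform g a"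
proof -
  define T where "T x p = g (p ^ multiplicity p x) / of_nat (p ^ multiplicity p x)" for x p :: nat
  have disj: "prime_factors a \<inter> prime_factors b = {}"
    using assms(3) by (auto simp: in_prime_factors_iff dest: coprime_common_divisor)
  have pf: "prime_factors (a*b) = prime_factors a \<union> prime_factors b"
    using assms by (simp add: prime_factors_product)
  have ma: "multiplicity p (a*b) = multiplicity p a" if "p \<in> prime_factors a" for p
  proof -
    have "\<not> p dvd b" using that disj by (auto simp: in_prime_factors_iff assms)
    hence "multiplicity p b = 0" by (rule not_dvd_imp_multiplicity_0)
    thus ?thesis using that assms by (simp add: prime_elem_multiplicity_mult_distrib in_prime_factors_iff)
  qed
  have mb: "multiplicity p (a*b) = multiplicity p b" if "p \<in> prime_factors b" for p
  proof -
    have "\<not> p dvd a" using that disj by (auto simp: in_prime_factors_iff assms)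
    hence "multiplicity p a = 0" by (rule not_dvd_imp_multiplicity_0)
    thus ?thesis using that assms by (simp add: prime_elem_multiplicity_mult_distrib in_prime_factors_iff)
  qed
  have "(\<Sum>p\<in>prime_factors (a*b). T (a*b) p) = (\<Sum>p\<in>prime_factors a. T (a*b) p) + (\<Sum>p\<in>prime_factors b. T (a*b) p)"
    unfolding pf by (rule sum.union_disjoint) (use disj in auto)
  also have "(\<Sum>p\<in>prime_factors a. T (a*b) p) = (\<Sum>p\<in>prime_factors a. T a p)"
    by (rule sum.cong) (auto simp: T_def ma)
  also have "(\<Sum>p\<in>prime_factors b. T (a*b) p) = (\<Sum>p\<in>prime_factors b. T b p)"
    by (rule sum.cong) (auto simp: T_def mb)
  finally have S: "(\<Sum>p\<in>prime_factors (a*b). T (a*b) p) = (\<Sum>p\<in>prime_factors a. T a p) + (\<Sum>p\<in>prime_factors b. T b p)" .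
  show ?thesis
    unfolding additive_transform_def T_def[symmetric] S by (simp add: algebra_simps)
qed


lemma dconv_swap:
  assumes "n > 0"
  shows "dconv u v n = (\<Sum>d | d dvd n. u (n div d) * v d)"
  unfolding dconv_def
proof (rule sum.reindex_bij_witness[of _ "\<lambda>d. n div d" "\<lambda>d. n div d"])
  fix d assume "d \<in> {d. d dvd n}"
  thus "n div (n div d) = d" "n div d \<in> {d. d dvd n}"
    using assms by (auto simp: dvd_div_eq_0_iff div_div_eq_right intro: div_dvd_div[of d n n, simplified])
  show "u (n div (n div d)) * v (n div d) = u d * v (n div d)" using \<open>d \<in> _\<close> assms
    by (metis dvd_div_mult_self div_mult_self1_is_m gr0I mem_Collect_eq mult_is_0 less_irrefl)
next
  fix d assume "d \<in> {d. d dvd n}"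
  thus "n div (n div d) = d" "n div d \<in> {d. d dvd n}"
    using assms by (auto simp: dvd_div_eq_0_iff div_div_eq_right intro: div_dvd_div[of d n n, simplified])
qed

lemma conv_coprime:
  fixes f g :: "nat \<Rightarrow> complex" and m k :: nat
  assumes mf: "multiplicative_fun f" and "m > 0" "k > 0" "coprime m k"
  shows "dconv f (additive_transform g) (m * k) =
           dconv f (additive_transform g) m * dconv Id_fun f k +
           dconv Id_fun f m * dconv f (additive_transform g) k"
    and "dconv Id_fun f (m * k) = dconv Id_fun f m * dconv Id_fun f k"
proof -
  let ?P = "additive_transform g"
  have pt: "m * k div (d1 * d2) = (m div d1) * (k div d2) \<and> m div d1 > 0 \<and> k div d2 > 0
      \<and> coprime (m div d1) (k div d2) \<and> d1 > 0 \<and> d2 > 0 \<and> coprime d1 d2"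
    if "d1 dvd m" "d2 dvd k" for d1 d2
  proof -
    have "d1 > 0" "d2 > 0" using that assms by (auto intro!: gr0I)
    moreover have "m div d1 > 0" "k div d2 > 0" using that assms
      by (auto intro!: gr0I simp: dvd_div_eq_0_iff)
    moreover have "coprime (m div d1) (k div d2)"
      using assms(4) coprime_divisors dvd_div_mult_self that by (metis dvd_triv_left)
    moreover have "coprime d1 d2" using assms(4) coprime_divisors that by blast
    moreover have "m * k div (d1 * d2) = (m div d1) * (k div d2)"
      using that by (simp add: div_mult_div_if_dvd)
    ultimately show ?thesis by simp
  qed
  have "dconv f ?P (m * k) = (\<Sum>d1 | d1 dvd m. \<Sum>d2 | d2 dvd k. f (m * k div (d1 * d2)) * ?P (d1 * d2))"
    using assms by (subst dconv_swap) (auto intro: divisor_sum_coprime)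
  also have "\<dots> = (\<Sum>d1 | d1 dvd m. \<Sum>d2 | d2 dvd k.
      (of_nat d1 * f (m div d1)) * (f (k div d2) * ?P d2) + (f (m div d1) * ?P d1) * (of_nat d2 * f (k div d2)))"
  proof (intro sum.cong refl)
    fix d1 d2 assume "d1 \<in> {d1. d1 dvd m}" "d2 \<in> {d2. d2 dvd k}"
    hence p: "m * k div (d1 * d2) = (m div d1) * (k div d2)" "m div d1 > 0" "k div d2 > 0"
      "coprime (m div d1) (k div d2)" "d1 > 0" "d2 > 0" "coprime d1 d2" using pt by auto
    show "f (m * k div (d1 * d2)) * ?P (d1 * d2) =
      (of_nat d1 * f (m div d1)) * (f (k div d2) * ?P d2) + (f (m div d1) * ?P d1) * (of_nat d2 * f (k div d2))"
      unfolding p(1) mult_apply[OF mf p(2,3,4)] Phi_coprime[OF p(5,6,7)] by (simp add: algebra_simps)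
  qed
  also have "\<dots> = dconv Id_fun f m * dconv f ?P k + dconv f ?P m * dconv Id_fun f k"
    unfolding dconv_swap[OF assms(2), of f] dconv_swap[OF assms(3), of f]
    unfolding dconv_def Id_fun_def sum.distrib sum_product by (simp add: algebra_simps)
  finally show "dconv f ?P (m * k) = dconv f ?P m * dconv Id_fun f k + dconv Id_fun f m * dconv f ?P k"
    by (simp add: algebra_simps)
  have "dconv Id_fun f (m * k) = (\<Sum>d1 | d1 dvd m. \<Sum>d2 | d2 dvd k. Id_fun (d1 * d2) * f (m * k div (d1 * d2)))"
    unfolding dconv_def by (rule divisor_sum_coprime) (use assms in auto)
  also have "\<dots> = (\<Sum>d1 | d1 dvd m. \<Sum>d2 | d2 dvd k. (of_nat d1 * f (m div d1)) * (of_nat d2 * f (k div d2)))"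
  proof (intro sum.cong refl)
    fix d1 d2 assume "d1 \<in> {d1. d1 dvd m}" "d2 \<in> {d2. d2 dvd k}"
    hence p: "m * k div (d1 * d2) = (m div d1) * (k div d2)" "m div d1 > 0" "k div d2 > 0"
      "coprime (m div d1) (k div d2)" using pt by auto
    show "Id_fun (d1 * d2) * f (m * k div (d1 * d2)) = (of_nat d1 * f (m div d1)) * (of_nat d2 * f (k div d2))"
      unfolding p(1) mult_apply[OF mf p(2,3,4)] Id_fun_def by (simp add: algebra_simps)
  qed
  also have "\<dots> = dconv Id_fun f m * dconv Id_fun f k"
    unfolding dconv_def Id_fun_def sum_product by simp
  finally show "dconv Id_fun f (m * k) = dconv Id_fun f m * dconv Id_fun f k" .
qed


lemma main_aux:
  fixes f g :: "nat \<Rightarrow> complex"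
  assumes mf: "multiplicative_fun f"
  shows "n > 0 \<Longrightarrow> (\<forall>p\<in>prime_factors n. dconv Id_fun f (p ^ multiplicity p n) \<noteq> 0) \<Longrightarrow>
    dconv f (additive_transform g) n =
         dconv Id_fun f n *
         (\<Sum>p\<in>prime_factors n.
            dconv f (additive_transform g) (p ^ multiplicity p n) /
            dconv Id_fun f (p ^ multiplicity p n))"
proof (induction n rule: less_induct)
  case (less n)
  let ?G = "dconv f (additive_transform g)" and ?F = "dconv Id_fun f"
  show ?case
  proof (cases "n = 1")
    case True
    thus ?thesis by (simp add: dconv_def additive_transform_def)
  next
    case False
    with less.prems obtain p where p: "p \<in> prime_factors n"
      by (metis Suc_lessI prime_factor_nat in_prime_factors_iff not_gr0 less_numeral_extra(4))
    have pp: "prime p" "p dvd n" using p by (auto simp: in_prime_factors_iff)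
    define a where "a = multiplicity p n"
    obtain m where nm: "n = p ^ a * m" and ndvd: "\<not> p dvd m"
    proof -
      have "n \<noteq> 0" "\<not> is_unit p" using pp less.prems by auto
      from multiplicity_decompose'[OF this] that show thesis unfolding a_def by blast
    qed
    have a0: "a > 0" unfolding a_def using pp less.prems
      by (simp add: prime_multiplicity_gt_zero_iff)
    have m0: "m > 0" using nm less.prems by (auto intro: gr0I)
    have p1: "p > 1" using pp prime_gt_1_nat by blast
    have "1 < p ^ a" using p1 a0 using one_less_power by blast
    hence "m < n" using nm m0 by simp
    have cop: "coprime (p ^ a) m" using ndvd pp
      by (metis coprime_commute prime_imp_coprime coprime_power_left_iff)
    have pa0: "p ^ a > 0" using p1 by simp
    have pfn: "prime_factors n = insert p (prime_factors m)"
      using nm pp a0 m0 by (simp add: prime_factors_product prime_factorization_prime_power)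
    have pnm: "p \<notin> prime_factors m" using ndvd by (auto simp: in_prime_factors_iff)
    have mult_eq: "multiplicity q n = multiplicity q m" if "q \<in> prime_factors m" for q
    proof -
      have "prime q" "q \<noteq> p" using that pnm by (auto simp: in_prime_factors_iff)
      hence "multiplicity q (p ^ a) = 0"
        using pp by (simp add: prime_multiplicity_other multiplicity_prime_power prime_elem_multiplicity_power_distrib)
      thus ?thesis using nm m0 pa0 \<open>prime q\<close>
        by (simp add: prime_elem_multiplicity_mult_distrib)
    qed
    have hm: "\<forall>q\<in>prime_factors m. ?F (q ^ multiplicity q m) \<noteq> 0"
      using less.prems(2) pfn mult_eq by auto
    have IH: "?G m = ?F m * (\<Sum>q\<in>prime_factors m. ?G (q ^ multiplicity q m) / ?F (q ^ multiplicity q m))"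
      using less.IH[OF \<open>m < n\<close> m0 hm] .
    have Fpa: "?F (p ^ a) \<noteq> 0" using less.prems(2) p a_def by auto
    have sumeq: "(\<Sum>q\<in>prime_factors n. ?G (q ^ multiplicity q n) / ?F (q ^ multiplicity q n))
       = ?G (p ^ a) / ?F (p ^ a) + (\<Sum>q\<in>prime_factors m. ?G (q ^ multiplicity q m) / ?F (q ^ multiplicity q m))"
      unfolding pfn using pnm by (simp add: a_def[symmetric] mult_eq cong: sum.cong)
    have Gn: "?G n = ?G (p^a) * ?F m + ?F (p^a) * ?G m"
      using conv_coprime(1)[OF mf pa0 m0 cop] nm by simp
    have Fn: "?F n = ?F (p^a) * ?F m"
      using conv_coprime(2)[OF mf pa0 m0 cop] nm by simp
    show ?thesis
      unfolding sumeq Gn Fn IH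
      using Fpa by (simp add: field_simps)
  qed
qed

theorem corollary2p1:
  fixes f g :: "nat \<Rightarrow> complex" and n :: nat
  assumes "multiplicative_fun f"
    and "n > 0"
    and "\<forall>p\<in>prime_factors n. dconv Id_fun f (p ^ multiplicity p n) \<noteq> 0"
  shows "dconv f (additive_transform g) n =
         dconv Id_fun f n *
         (\<Sum>p\<in>prime_factors n.
            dconv f (additive_transform g) (p ^ multiplicity p n) /
            dconv Id_fun f (p ^ multiplicity p n))"
  using main_aux[OF assms(1)] assms(2,3) by blast

end
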